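(* Let $D\subset\Phi^+$ be an orthogonal subset with $D\cap\mathcal C_1=\{\varepsilon_1+\varepsilon_j\}$ for some $1<j\le n$. Let $\tilde\Phi^+$ be the set of roots of $\Phi^+$ involving neither $\varepsilon_1$ nor $\varepsilon_j$ (i.e. $\tilde\Phi^+=\Phi^+\setminus(\mathcal C_1\cup\mathcal C_j\cup\mathcal R_j\cup\mathcal R_{-j})$), $\tilde D=D\cap\tilde\Phi^+$, $\tilde\sigma=\prod_{\beta\in\tilde D}r_\beta$, and $l'(\tilde\sigma)=\#\{\alpha\in\tilde\Phi^+:\tilde\sigma(\alpha)\notin\tilde\Phi^+\}$ (the length of $\tilde\sigma$ in the Weyl group of the root system $\tilde\Phi=\tilde\Phi^+\cup-\tilde\Phi^+$). Then $l(\sigma)=l'(\tilde\sigma)+|S(\varepsilon_1+\varepsilon_j)|+1$.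
   Context: Let $\Phi$ be a root system of type $B_n$, $C_n$ or $D_n$ in $\mathbb R^n$ with standard basis $\varepsilon_1,\dots,\varepsilon_n$ and positive roots $\Phi^+=\{\varepsilon_i\pm\varepsilon_j:1\le i<j\le n\}\cup\Phi_1^+$, where $\Phi_1^+=\emptyset$ for $D_n$, $\{\varepsilon_i\}$ for $B_n$, $\{2\varepsilon_i\}$ for $C_n$. $D\subset\Phi^+$ is orthogonal if its roots are pairwise orthogonal. $r_\beta$ denotes the reflection in the hyperplane orthogonal to $\beta$, $\sigma=\prod_{\beta\in D}r_\beta$, and $l(\sigma)=\#\{\alpha\in\Phi^+:\sigma(\alpha)\in-\Phi^+\}$ (the length of $\sigma$ in the Weyl group). $\mathrm{col}(\varepsilon_i\pm\varepsilon_j)=\mathrm{col}(\varepsilon_i)=\mathrm{col}(2\varepsilon_i)=i$; $\mathrm{row}(\varepsilon_i\pm\varepsilon_j)=\mp j$, $\mathrm{row}(\varepsilon_i)=0$, $\mathrm{row}(2\varepsilon_i)=-i$; $\mathcal R_i=\{\alpha\in\Phi^+:\mathrm{row}(\alpha)=i\}$, $\mathcal C_j=\{\alpha\in\Phi^+:\mathrm{col}(\alpha)=j\}$. For $\beta\in\Phi^+$, $S(\beta)=\{\alpha\in\Phi^+:\beta-\alpha\in\Phi^+\}$. *)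

theory Defs
  imports Complex_Main "HOL-Library.Function_Algebras"
begin

text \<open>Vectors of R^n are modelled as functions nat => real, with the standard
 basis vectors eps 1, ..., eps n (coordinates outside {1..n} are zero for all roots).\<close>

datatype rtype = TypeB | TypeC | TypeD

definition eps :: "nat \<Rightarrow> nat \<Rightarrow> real" where
  "eps i = (\<lambda>k. if k = i then 1 else 0)"

definition ip :: "nat \<Rightarrow> (nat \<Rightarrow> real) \<Rightarrow> (nat \<Rightarrow> real) \<Rightarrow> real" where
  "ip n x y = (\<Sum>k\<in>{1..n}. x k * y k)"

definition short_pos :: "rtype \<Rightarrow> nat \<Rightarrow> (nat \<Rightarrow> real) set" where
  "short_pos t n = (case t of
      TypeD \<Rightarrow> {}
    | TypeB \<Rightarrow> {eps i | i. 1 \<le> i \<and> i \<le> n}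
    | TypeC \<Rightarrow> {(\<lambda>k. 2 * eps i k) | i. 1 \<le> i \<and> i \<le> n})"

definition pos_roots :: "rtype \<Rightarrow> nat \<Rightarrow> (nat \<Rightarrow> real) set" where
  "pos_roots t n =
     {eps i + eps j | i j. 1 \<le> i \<and> i < j \<and> j \<le> n}
   \<union> {eps i - eps j | i j. 1 \<le> i \<and> i < j \<and> j \<le> n}
   \<union> short_pos t n"

definition orthogonal_set :: "nat \<Rightarrow> (nat \<Rightarrow> real) set \<Rightarrow> bool" where
  "orthogonal_set n D = (\<forall>\<alpha>\<in>D. \<forall>\<beta>\<in>D. \<alpha> \<noteq> \<beta> \<longrightarrow> ip n \<alpha> \<beta> = 0)"

definition refl :: "nat \<Rightarrow> (nat \<Rightarrow> real) \<Rightarrow> (nat \<Rightarrow> real) \<Rightarrow> (nat \<Rightarrow> real)" where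
  "refl n \<beta> x = (\<lambda>k. x k - (2 * ip n x \<beta> / ip n \<beta> \<beta>) * \<beta> k)"

definition refl_prod :: "nat \<Rightarrow> (nat \<Rightarrow> real) set \<Rightarrow> (nat \<Rightarrow> real) \<Rightarrow> (nat \<Rightarrow> real)" where
  "refl_prod n D = Finite_Set.fold (\<lambda>\<beta> g. refl n \<beta> \<circ> g) id D"

definition len :: "rtype \<Rightarrow> nat \<Rightarrow> ((nat \<Rightarrow> real) \<Rightarrow> (nat \<Rightarrow> real)) \<Rightarrow> nat" where
  "len t n w = card {\<alpha> \<in> pos_roots t n. - w \<alpha> \<in> pos_roots t n}"

text \<open>col and row, following the table:
 col(eps_i +- eps_j) = col(eps_i) = col(2 eps_i) = i;
 row(eps_i +- eps_j) = -+ j, row(eps_i) = 0, row(2 eps_i) = -i.\<close>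
definition col :: "(nat \<Rightarrow> real) \<Rightarrow> nat" where
  "col \<alpha> = (LEAST i. \<alpha> i \<noteq> 0)"

definition row :: "(nat \<Rightarrow> real) \<Rightarrow> int" where
  "row \<alpha> = (if \<exists>j. j \<noteq> col \<alpha> \<and> \<alpha> j \<noteq> 0
              then (let j = (THE j. j \<noteq> col \<alpha> \<and> \<alpha> j \<noteq> 0)
                    in (if \<alpha> j > 0 then - int j else int j))
              else if \<alpha> (col \<alpha>) = 2 then - int (col \<alpha>) else 0)"

definition Rows :: "rtype \<Rightarrow> nat \<Rightarrow> int \<Rightarrow> (nat \<Rightarrow> real) set" where
  "Rows t n i = {\<alpha> \<in> pos_roots t n. row \<alpha> = i}"

definition Cols :: "rtype \<Rightarrow> nat \<Rightarrow> nat \<Rightarrow> (nat \<Rightarrow> real) set" where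
  "Cols t n j = {\<alpha> \<in> pos_roots t n. col \<alpha> = j}"

definition Sset :: "rtype \<Rightarrow> nat \<Rightarrow> (nat \<Rightarrow> real) \<Rightarrow> (nat \<Rightarrow> real) set" where
  "Sset t n \<beta> = {\<alpha> \<in> pos_roots t n. \<beta> - \<alpha> \<in> pos_roots t n}"

end

theory Submission
  imports Defs
begin

definition vec :: "nat \<Rightarrow> nat \<Rightarrow> real \<Rightarrow> nat \<Rightarrow> real" where
  "vec a b e = (\<lambda>k. eps a k + e * eps b k)"

definition V :: "nat \<times> nat \<times> real \<Rightarrow> nat \<Rightarrow> real" where
  "V x = (case x of (a,b,e) \<Rightarrow> vec a b e)"

definition LIdx :: "nat set \<Rightarrow> (nat \<times> nat \<times> real) set" where
  "LIdx J = {(a,b,e). a \<in> J \<and> b \<in> J \<and> a < b \<and> (e = 1 \<or> e = -1)}"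

definition shc :: "rtype \<Rightarrow> real" where
  "shc t = (case t of TypeC \<Rightarrow> 1 | _ \<Rightarrow> 0)"

definition SIdx :: "rtype \<Rightarrow> nat set \<Rightarrow> (nat \<times> nat \<times> real) set" where
  "SIdx t J = (if t = TypeD then {} else {(a,a,shc t) | a. a \<in> J})"

definition Idx :: "rtype \<Rightarrow> nat set \<Rightarrow> (nat \<times> nat \<times> real) set" where
  "Idx t J = LIdx J \<union> SIdx t J"

lemma eps_app: "eps i k = (if k = i then 1 else 0)" by (simp add: eps_def)

lemma vec_app: "vec a b e k = (if k = a then 1 else 0) + e * (if k = b then 1 else 0)"
  by (simp add: vec_def eps_def)

lemma vec_p: "eps i + eps j = vec i j 1" and vec_m: "eps i - eps j = vec i j (-1)"
  and vec_s1: "eps i = vec i i 0" and vec_s2: "(\<lambda>k. 2 * eps i k) = vec i i 1"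
  by (auto simp: vec_def fun_eq_iff)

lemma V_L: "V ` LIdx {1..n} = {eps i + eps j |i j. 1 \<le> i \<and> i < j \<and> j \<le> n}
   \<union> {eps i - eps j |i j. 1 \<le> i \<and> i < j \<and> j \<le> n}" (is "?L = ?R")
proof
  show "?L \<subseteq> ?R"
    unfolding vec_p vec_m LIdx_def V_def by auto
next
  show "?R \<subseteq> ?L"
  proof
    fix x assume "x \<in> {eps i + eps j |i j. 1 \<le> i \<and> i < j \<and> j \<le> n}
   \<union> {eps i - eps j |i j. 1 \<le> i \<and> i < j \<and> j \<le> n}"
    then obtain i j e where "x = vec i j e" "1 \<le> i" "i < j" "j \<le> n" "e = 1 \<or> e = -1"
      unfolding vec_p vec_m by blast
    then show "x \<in> V ` LIdx {1..n}" unfolding LIdx_def V_def image_iff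
      by (intro bexI[of _ "(i,j,e)"]) auto
  qed
qed

lemma V_S: "V ` SIdx t {1..n} = short_pos t n"
  unfolding short_pos_def SIdx_def shc_def
  unfolding vec_s2 by (cases t) (auto simp: V_def image_iff vec_s1)

lemma pos_roots_V: "pos_roots t n = V ` Idx t {1..n}"
  unfolding pos_roots_def Idx_def image_Un V_L V_S by simp

lemma V_inj: "inj_on V (Idx t J)"
proof (rule inj_onI)
  fix x y assume x: "x \<in> Idx t J" and y: "y \<in> Idx t J" and eq: "V x = V y"
  obtain a b e where xa: "x = (a,b,e)" by (cases x)
  obtain a' b' e' where ya: "y = (a',b',e')" by (cases y)
  have h: "vec a b e k = vec a' b' e' k" for k using eq xa ya by (simp add: V_def)
  have ha: "vec a b e a = vec a' b' e' a" and hb: "vec a b e b = vec a' b' e' b"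
   and ha': "vec a b e a' = vec a' b' e' a'" and hb': "vec a b e b' = vec a' b' e' b'" using h by blast+
  have c: "(a < b \<and> (e = 1 \<or> e = -1)) \<or> (a = b \<and> (e = 0 \<or> e = 1))"
    using x xa by (auto simp: Idx_def LIdx_def SIdx_def shc_def split: rtype.splits if_splits)
  have c': "(a' < b' \<and> (e' = 1 \<or> e' = -1)) \<or> (a' = b' \<and> (e' = 0 \<or> e' = 1))"
    using y ya by (auto simp: Idx_def LIdx_def SIdx_def shc_def split: rtype.splits if_splits)
  from c c' ha hb ha' hb' show "x = y" unfolding xa ya vec_app
    by (auto split: if_splits)
qed

lemma mem_long:
  assumes "c \<in> J" "d \<in> J" "c \<noteq> d" "u = 1 \<or> u = -1" "v = 1 \<or> v = -1"
  shows "(\<lambda>k. u * eps c k + v * eps d k) \<in> V ` Idx t J \<longleftrightarrow> (c < d \<and> u = 1) \<or> (d < c \<and> v = 1)"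
proof
  assume "(\<lambda>k. u * eps c k + v * eps d k) \<in> V ` Idx t J"
  then obtain a b e where x: "(a,b,e) \<in> Idx t J" and eq: "(\<lambda>k. u * eps c k + v * eps d k) = vec a b e"
    by (auto simp: V_def)
  have h: "u * eps c k + v * eps d k = vec a b e k" for k using eq by metis
  have c: "(a < b \<and> (e = 1 \<or> e = -1)) \<or> (a = b \<and> (e = 0 \<or> e = 1))"
    using x by (auto simp: Idx_def LIdx_def SIdx_def shc_def split: rtype.splits if_splits)
  from h[of a] h[of b] h[of c] h[of d] c assms show "(c < d \<and> u = 1) \<or> (d < c \<and> v = 1)"
    unfolding vec_app eps_app by (auto split: if_splits)
next
  assume "(c < d \<and> u = 1) \<or> (d < c \<and> v = 1)"
  then show "(\<lambda>k. u * eps c k + v * eps d k) \<in> V ` Idx t J"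
  proof
    assume "c < d \<and> u = 1"
    then show ?thesis using assms unfolding image_iff Idx_def LIdx_def
      by (intro bexI[of _ "(c,d,v)"]) (auto simp: V_def vec_def)
  next
    assume "d < c \<and> v = 1"
    then show ?thesis using assms unfolding image_iff Idx_def LIdx_def
      by (intro bexI[of _ "(d,c,u)"]) (auto simp: V_def vec_def)
  qed
qed

lemma mem_short:
  assumes "c \<in> J" "u = 1 \<or> u = -1" "t \<noteq> TypeD"
  shows "(\<lambda>k. u * vec c c (shc t) k) \<in> V ` Idx t J \<longleftrightarrow> u = 1"
proof
  assume "(\<lambda>k. u * vec c c (shc t) k) \<in> V ` Idx t J"
  then obtain a b e where x: "(a,b,e) \<in> Idx t J" and eq: "(\<lambda>k. u * vec c c (shc t) k) = vec a b e"
    by (auto simp: V_def)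
  have h: "u * vec c c (shc t) k = vec a b e k" for k using eq by metis
  have c: "(a < b \<and> (e = 1 \<or> e = -1)) \<or> (a = b \<and> e = shc t)"
    using x by (auto simp: Idx_def LIdx_def SIdx_def split: if_splits)
  have s: "shc t = 0 \<or> shc t = 1" by (cases t) (auto simp: shc_def)
  from h[of a] h[of b] h[of c] c assms s show "u = 1"
    unfolding vec_app by (auto split: if_splits)
next
  assume "u = 1"
  then show "(\<lambda>k. u * vec c c (shc t) k) \<in> V ` Idx t J" using assms unfolding image_iff Idx_def SIdx_def
    by (intro bexI[of _ "(c,c,shc t)"]) (auto simp: V_def)
qed

lemma ip_lin: "ip n (\<lambda>k. x k - c * y k) z = ip n x z - c * ip n y z"
  by (simp add: ip_def sum_subtractf sum_distrib_left algebra_simps)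

lemma ip_add: "ip n (x + y) z = ip n x z + ip n y z"
  by (simp add: ip_def sum.distrib algebra_simps)

lemma ip_smul: "ip n (\<lambda>k. c * x k) z = c * ip n x z"
  by (simp add: ip_def sum_distrib_left algebra_simps)

lemma ip_sym: "ip n x y = ip n y x"
  by (simp add: ip_def mult.commute)

lemma ip_eps: "a \<in> {1..n} \<Longrightarrow> ip n (eps a) y = y a"
proof -
  have "(\<Sum>k\<in>{1..n}. eps a k * y k) = (\<Sum>k\<in>{1..n}. if a = k then y a else 0)"
    by (rule sum.cong) (auto simp: eps_def)
  then show "a \<in> {1..n} \<Longrightarrow> ip n (eps a) y = y a" unfolding ip_def by simp
qed

lemma refl_add: "refl n b (x + y) = refl n b x + refl n b y"
  by (simp add: refl_def ip_add fun_eq_iff add_divide_distrib algebra_simps)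

lemma refl_smul: "refl n b (\<lambda>k. c * x k) = (\<lambda>k. c * refl n b x k)"
  by (simp add: refl_def ip_smul fun_eq_iff algebra_simps)

lemma refl_comm:
  assumes "ip n x y = 0"
  shows "refl n y \<circ> refl n x = refl n x \<circ> refl n y"
proof -
  have "ip n y x = 0" using assms ip_sym by metis
  then show ?thesis using assms
    unfolding refl_def comp_def fun_eq_iff ip_lin by simp
qed

lemma cfc:
  assumes "orthogonal_set n D"
  shows "comp_fun_commute_on D (\<lambda>\<beta> g. refl n \<beta> \<circ> g)"
proof
  fix x y assume "x \<in> D" "y \<in> D"
  then have "refl n y \<circ> refl n x = refl n x \<circ> refl n y"
    using assms refl_comm[of n x y] unfolding orthogonal_set_def by (cases "x = y") auto
  then show "(\<lambda>g. refl n y \<circ> g) \<circ> (\<lambda>g. refl n x \<circ> g) = (\<lambda>g. refl n x \<circ> g) \<circ> (\<lambda>g. refl n y \<circ> g)"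
    by (simp add: fun_eq_iff comp_def)
qed

lemma refl_prod_insert:
  assumes "orthogonal_set n D" "insert x A \<subseteq> D" "finite A" "x \<notin> A"
  shows "refl_prod n (insert x A) = refl n x \<circ> refl_prod n A"
  unfolding refl_prod_def
  by (rule comp_fun_commute_on.fold_insert[OF cfc[OF assms(1)] assms(2-4)])

lemma orth_subset: "orthogonal_set n D \<Longrightarrow> A \<subseteq> D \<Longrightarrow> orthogonal_set n A"
  unfolding orthogonal_set_def by blast

definition SP :: "nat \<Rightarrow> ((nat \<Rightarrow> real) \<Rightarrow> (nat \<Rightarrow> real)) \<Rightarrow> (nat \<Rightarrow> nat) \<Rightarrow> (nat \<Rightarrow> real) \<Rightarrow> bool" where
  "SP n w p s \<longleftrightarrow> (\<forall>x y. w (x + y) = w x + w y) \<and> (\<forall>c x. w (\<lambda>k. c * x k) = (\<lambda>k. c * w x k))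
     \<and> bij_betw p {1..n} {1..n}
     \<and> (\<forall>a\<in>{1..n}. (s a = 1 \<or> s a = -1) \<and> w (eps a) = (\<lambda>k. s a * eps (p a) k))"

lemma SP_vec:
  assumes "SP n w p s" "a \<in> {1..n}" "b \<in> {1..n}"
  shows "w (vec a b e) = (\<lambda>k. s a * eps (p a) k + (e * s b) * eps (p b) k)"
proof -
  have v: "vec a b e = eps a + (\<lambda>k. e * eps b k)" by (simp add: vec_def fun_eq_iff)
  have 1: "w (x + y) = w x + w y" for x y using assms(1) unfolding SP_def by blast
  have 2: "w (\<lambda>k. c * x k) = (\<lambda>k. c * w x k)" for c x using assms(1) unfolding SP_def by blast
  have 3: "w (eps a) = (\<lambda>k. s a * eps (p a) k)" "w (eps b) = (\<lambda>k. s b * eps (p b) k)"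
    using assms unfolding SP_def by blast+
  show ?thesis unfolding v 1 2 3 by (simp add: fun_eq_iff)
qed

lemma SP_id: "SP n id id (\<lambda>_. 1)"
  unfolding SP_def by (simp add: fun_eq_iff)

lemma SP_comp:
  assumes "SP n w1 p1 s1" "SP n w2 p2 s2"
  shows "SP n (w1 \<circ> w2) (p1 \<circ> p2) (\<lambda>a. s2 a * s1 (p2 a))"
proof -
  have b: "bij_betw (p1 \<circ> p2) {1..n} {1..n}" using assms unfolding SP_def
    using bij_betw_trans by blast
  have p2: "p2 a \<in> {1..n}" if "a \<in> {1..n}" for a using assms(2) that unfolding SP_def bij_betw_def by blast
  have a1: "w1 (x + y) = w1 x + w1 y" for x y using assms(1) unfolding SP_def by blast
  have m1: "w1 (\<lambda>k. c * x k) = (\<lambda>k. c * w1 x k)" for c x using assms(1) unfolding SP_def by blast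
  have e1: "(s1 a = 1 \<or> s1 a = -1) \<and> w1 (eps a) = (\<lambda>k. s1 a * eps (p1 a) k)" if "a \<in> {1..n}" for a
    using assms(1) that unfolding SP_def by blast
  have a2: "w2 (x + y) = w2 x + w2 y" for x y using assms(2) unfolding SP_def by blast
  have m2: "w2 (\<lambda>k. c * x k) = (\<lambda>k. c * w2 x k)" for c x using assms(2) unfolding SP_def by blast
  have e2: "(s2 a = 1 \<or> s2 a = -1) \<and> w2 (eps a) = (\<lambda>k. s2 a * eps (p2 a) k)" if "a \<in> {1..n}" for a
    using assms(2) that unfolding SP_def by blast
  have e: "(s2 a * s1 (p2 a) = 1 \<or> s2 a * s1 (p2 a) = -1) \<and>
      (w1 \<circ> w2) (eps a) = (\<lambda>k. (s2 a * s1 (p2 a)) * eps ((p1 \<circ> p2) a) k)" if "a \<in> {1..n}" for a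
  proof -
    have "(w1 \<circ> w2) (eps a) = w1 (\<lambda>k. s2 a * eps (p2 a) k)" using e2[OF that] by simp
    also have "\<dots> = (\<lambda>k. s2 a * w1 (eps (p2 a)) k)" by (rule m1)
    also have "\<dots> = (\<lambda>k. (s2 a * s1 (p2 a)) * eps ((p1 \<circ> p2) a) k)"
      using e1[OF p2[OF that]] by (simp add: fun_eq_iff)
    finally show ?thesis using e1[OF p2[OF that]] e2[OF that] by auto
  qed
  show ?thesis unfolding SP_def using b e a1 a2 m1 m2 by simp
qed

lemma ip_vec: "c \<in> {1..n} \<Longrightarrow> d \<in> {1..n} \<Longrightarrow> ip n (vec c d e) y = y c + e * y d"
proof -
  assume a: "c \<in> {1..n}" "d \<in> {1..n}"
  have "vec c d e = eps c + (\<lambda>k. e * eps d k)" by (simp add: vec_def fun_eq_iff)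
  then show ?thesis using a by (simp add: ip_add ip_smul ip_eps)
qed

lemma refl_eps: "a \<in> {1..n} \<Longrightarrow> refl n b (eps a) = (\<lambda>k. eps a k - (2 * b a / ip n b b) * b k)"
  by (simp add: refl_def ip_eps)

lemma swap_bij: "c \<in> A \<Longrightarrow> d \<in> A \<Longrightarrow> bij_betw (\<lambda>a. if a = c then d else if a = d then c else a) A A"
  by (rule bij_betw_byWitness[where f' = "\<lambda>a. if a = c then d else if a = d then c else a"]) auto

lemma refl_long:
  assumes "c \<in> {1..n}" "d \<in> {1..n}" "c < d" "e = 1 \<or> e = -1"
  shows "SP n (refl n (vec c d e)) (\<lambda>a. if a = c then d else if a = d then c else a) (\<lambda>a. if a = c \<or> a = d then -e else 1)"
proof -
  have ii: "ip n (vec c d e) (vec c d e) = 2" using assms by (auto simp: ip_vec vec_app)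
  have "refl n (vec c d e) (eps a) = (\<lambda>k. (if a = c \<or> a = d then -e else 1) * eps (if a = c then d else if a = d then c else a) k)"
    if "a \<in> {1..n}" for a
    using that assms unfolding refl_eps[OF that] ii by (auto simp: fun_eq_iff vec_app eps_app)
  then show ?thesis unfolding SP_def using refl_add refl_smul swap_bij[OF assms(1,2)] assms(4) by auto
qed

lemma refl_short:
  assumes "c \<in> {1..n}" "t \<noteq> TypeD"
  shows "SP n (refl n (vec c c (shc t))) id (\<lambda>a. if a = c then -1 else 1)"
proof -
  have s: "shc t = 0 \<or> shc t = 1" by (cases t) (auto simp: shc_def)
  have ii: "ip n (vec c c (shc t)) (vec c c (shc t)) = (1 + shc t)^2" using assms by (auto simp: ip_vec vec_app power2_eq_square algebra_simps)
  have "refl n (vec c c (shc t)) (eps a) = (\<lambda>k. (if a = c then -1 else 1) * eps a k)"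
    if "a \<in> {1..n}" for a
    using that assms s unfolding refl_eps[OF that] ii by (auto simp: fun_eq_iff vec_app eps_app)
  then show ?thesis unfolding SP_def using refl_add refl_smul by auto
qed

lemma refl_V_SP:
  assumes "x \<in> Idx t K" "K \<subseteq> {1..n}"
  shows "\<exists>p s. SP n (refl n (V x)) p s \<and> (\<forall>a. a \<notin> K \<longrightarrow> p a = a \<and> s a = 1)"
proof -
  obtain c d e where x: "x = (c,d,e)" by (cases x)
  show ?thesis
  proof (cases "x \<in> LIdx K")
    case True
    then have h: "c \<in> K" "d \<in> K" "c < d" "e = 1 \<or> e = -1" using x by (auto simp: LIdx_def)
    have "SP n (refl n (vec c d e)) (\<lambda>a. if a = c then d else if a = d then c else a) (\<lambda>a. if a = c \<or> a = d then -e else 1)"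
      using refl_long[of c n d e] h assms(2) by blast
    moreover have "\<forall>a. a \<notin> K \<longrightarrow> (if a = c then d else if a = d then c else a) = a \<and> (if a = c \<or> a = d then -e else 1) = 1"
      using h by auto
    ultimately show ?thesis unfolding x V_def by auto
  next
    case False
    then have h: "c \<in> K" "d = c" "e = shc t" "t \<noteq> TypeD" using x assms(1)
      by (auto simp: Idx_def SIdx_def split: if_splits)
    show ?thesis using refl_short[of c n t] h assms(2) unfolding x V_def
      by (intro exI conjI) auto
  qed
qed

lemma sigT_SP:
  assumes "finite A" "orthogonal_set n A" "A \<subseteq> V ` Idx t K" "K \<subseteq> {1..n}"
  shows "\<exists>p s. SP n (refl_prod n A) p s \<and> (\<forall>a. a \<notin> K \<longrightarrow> p a = a \<and> s a = 1)"
  using assms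
proof (induction A rule: finite_induct)
  case empty
  have "refl_prod n {} = id" by (simp add: refl_prod_def)
  then show ?case using SP_id[of n, unfolded id_def] by (intro exI[of _ id] exI[of _ "\<lambda>_. 1"]) simp
next
  case (insert x F)
  have o: "orthogonal_set n F" using insert.prems(1) orth_subset by blast
  obtain p s where ps: "SP n (refl_prod n F) p s" "\<forall>a. a \<notin> K \<longrightarrow> p a = a \<and> s a = 1"
    using insert.IH[OF o] insert.prems by blast
  obtain y where y: "y \<in> Idx t K" "x = V y" using insert.prems(2) by blast
  obtain p1 s1 where ps1: "SP n (refl n x) p1 s1" "\<forall>a. a \<notin> K \<longrightarrow> p1 a = a \<and> s1 a = 1"
    using refl_V_SP[OF y(1) insert.prems(3)] y(2) by blast
  have e: "refl_prod n (insert x F) = refl n x \<circ> refl_prod n F"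
    by (rule refl_prod_insert[OF insert.prems(1) subset_refl insert.hyps(1,2)])
  show ?case unfolding e using SP_comp[OF ps1(1) ps(1)] ps(2) ps1(2)
    by (intro exI conjI) (assumption, auto)
qed

lemma Idx_cases:
  assumes "(a,b,e) \<in> Idx t J"
  shows "(a \<in> J \<and> b \<in> J \<and> a < b \<and> (e = 1 \<or> e = -1)) \<or> (t \<noteq> TypeD \<and> a \<in> J \<and> b = a \<and> e = shc t)"
  using assms by (auto simp: Idx_def LIdx_def SIdx_def split: if_splits)

lemma shc_vals: "shc t = 0 \<or> shc t = 1" by (cases t) (auto simp: shc_def)

lemma col_V:
  assumes "(a,b,e) \<in> Idx t J"
  shows "col (V (a,b,e)) = a"
proof -
  have "vec a b e a \<noteq> 0" using Idx_cases[OF assms] shc_vals[of t] by (auto simp: vec_app)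
  moreover have "vec a b e i = 0" if "i < a" for i using Idx_cases[OF assms] that by (auto simp: vec_app)
  ultimately show ?thesis unfolding col_def V_def
    by (auto intro!: Least_equality) (meson not_le)
qed

lemma row_long:
  assumes "(a,b,e) \<in> Idx t J" "a < b"
  shows "row (V (a,b,e)) = (if e > 0 then - int b else int b)"
proof -
  have c: "col (V (a,b,e)) = a" by (rule col_V[OF assms(1)])
  have e: "e = 1 \<or> e = -1" using Idx_cases[OF assms(1)] assms(2) by auto
  have th: "(THE j. j \<noteq> a \<and> vec a b e j \<noteq> 0) = b"
    by (rule the_equality) (use assms(2) e in \<open>auto simp: vec_app split: if_splits\<close>)
  have ex: "\<exists>j. j \<noteq> a \<and> vec a b e j \<noteq> 0" using assms(2) e by (intro exI[of _ b]) (auto simp: vec_app)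
  show ?thesis unfolding row_def c using th ex e by (auto simp: V_def vec_app)
qed

lemma row_short:
  assumes "(a,a,e) \<in> Idx t J"
  shows "row (V (a,a,e)) = (if t = TypeC then - int a else 0)"
proof -
  have c: "col (V (a,a,e)) = a" by (rule col_V[OF assms(1)])
  have e: "e = shc t" "t \<noteq> TypeD" using Idx_cases[OF assms(1)] by auto
  have ex: "\<not> (\<exists>j. j \<noteq> a \<and> vec a a e j \<noteq> 0)" by (auto simp: vec_app)
  show ?thesis unfolding row_def c using ex e by (cases t) (auto simp: V_def vec_app shc_def)
qed

definition Kset :: "nat \<Rightarrow> nat \<Rightarrow> nat set" where "Kset n j = {1..n} - {1, j}"

lemma PhiT_char:
  assumes "1 < j" "j \<le> n"
  shows "pos_roots t n - (Cols t n 1 \<union> Cols t n j \<union> Rows t n (int j) \<union> Rows t n (- int j))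
     = V ` Idx t (Kset n j)" (is "?L = ?R")
proof -
  have key: "x \<in> Idx t (Kset n j) \<longleftrightarrow> col (V x) \<noteq> 1 \<and> col (V x) \<noteq> j \<and> row (V x) \<noteq> int j \<and> row (V x) \<noteq> - int j"
    if x: "x \<in> Idx t {1..n}" for x
  proof -
    obtain a b e where xx: "x = (a,b,e)" by (cases x)
    have xi: "(a,b,e) \<in> Idx t {1..n}" using x xx by simp
    show ?thesis
    proof (cases "a < b")
      case True
      have "e = 1 \<or> e = -1" "a \<in> {1..n}" "b \<in> {1..n}" using Idx_cases[OF xi] True by auto
      then show ?thesis unfolding xx col_V[OF xi] row_long[OF xi True] using True assms
        by (auto simp: Idx_def LIdx_def Kset_def SIdx_def)
    next
      case False
      then have h: "b = a" "e = shc t" "t \<noteq> TypeD" "a \<in> {1..n}" using Idx_cases[OF xi] by auto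
      then have xi': "(a,a,e) \<in> Idx t {1..n}" using xi by simp
      show ?thesis unfolding xx h(1) col_V[OF xi'] row_short[OF xi'] using h assms
        by (auto simp: Idx_def LIdx_def Kset_def SIdx_def)
    qed
  qed
  have sub: "Idx t (Kset n j) \<subseteq> Idx t {1..n}" by (auto simp: Idx_def LIdx_def SIdx_def Kset_def)
  show ?thesis
  proof
    show "?L \<subseteq> ?R"
    proof
      fix \<alpha> assume "\<alpha> \<in> ?L"
      then obtain x where x: "x \<in> Idx t {1..n}" "\<alpha> = V x" and
        c: "col (V x) \<noteq> 1 \<and> col (V x) \<noteq> j \<and> row (V x) \<noteq> int j \<and> row (V x) \<noteq> - int j"
        unfolding pos_roots_V Cols_def Rows_def by auto
      then show "\<alpha> \<in> ?R" using key[OF x(1)] by auto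
    qed
  next
    show "?R \<subseteq> ?L"
    proof
      fix \<alpha> assume "\<alpha> \<in> ?R"
      then obtain x where x: "x \<in> Idx t (Kset n j)" "\<alpha> = V x" by auto
      then have x1: "x \<in> Idx t {1..n}" using sub by auto
      then show "\<alpha> \<in> ?L" using key[OF x1] x unfolding pos_roots_V Cols_def Rows_def by auto
    qed
  qed
qed

lemma SP_sign: "SP n w p s \<Longrightarrow> a \<in> {1..n} \<Longrightarrow> s a = 1 \<or> s a = -1"
  unfolding SP_def by blast

lemma SP_bij: "SP n w p s \<Longrightarrow> bij_betw p {1..n} {1..n}"
  unfolding SP_def by blast

definition NEG :: "(nat \<Rightarrow> nat) \<Rightarrow> (nat \<Rightarrow> real) \<Rightarrow> nat \<times> nat \<times> real \<Rightarrow> bool" where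
  "NEG p s x = (case x of (a,b,e) \<Rightarrow> if a = b then s a = -1
      else (p a < p b \<and> s a = -1) \<or> (p b < p a \<and> e * s b = -1))"

lemma neg_char:
  assumes sp: "SP n w p s" and x: "(a,b,e) \<in> Idx t {1..n}" and J: "J \<subseteq> {1..n}" "p a \<in> J" "p b \<in> J"
  shows "(- w (V (a,b,e)) \<in> V ` Idx t J \<longleftrightarrow> NEG p s (a,b,e)) \<and> (w (V (a,b,e)) \<in> V ` Idx t J \<longleftrightarrow> \<not> NEG p s (a,b,e))"
proof -
  have ab: "a \<in> {1..n}" "b \<in> {1..n}" using Idx_cases[OF x] by auto
  have wv: "w (V (a,b,e)) = (\<lambda>k. s a * eps (p a) k + (e * s b) * eps (p b) k)"
    using SP_vec[OF sp ab] by (simp add: V_def)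
  have sa: "s a = 1 \<or> s a = -1" "s b = 1 \<or> s b = -1" using SP_sign[OF sp] ab by auto
  show ?thesis
  proof (cases "a < b")
    case True
    have e: "e = 1 \<or> e = -1" using Idx_cases[OF x] True by auto
    have pne: "p a \<noteq> p b" proof
      assume "p a = p b"
      then have "a = b" using inj_onD[OF bij_betw_imp_inj_on[OF SP_bij[OF sp]]] ab by blast
      then show False using True by simp
    qed
    have es: "e * s b = 1 \<or> e * s b = -1" using e sa by auto
    have neg: "- w (V (a,b,e)) = (\<lambda>k. (- s a) * eps (p a) k + (- (e * s b)) * eps (p b) k)"
      unfolding wv by (simp add: fun_eq_iff)
    have m1: "- w (V (a,b,e)) \<in> V ` Idx t J \<longleftrightarrow> (p a < p b \<and> - s a = 1) \<or> (p b < p a \<and> - (e * s b) = 1)"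
      unfolding neg by (rule mem_long) (use J pne sa es in auto)
    have m2: "w (V (a,b,e)) \<in> V ` Idx t J \<longleftrightarrow> (p a < p b \<and> s a = 1) \<or> (p b < p a \<and> e * s b = 1)"
      unfolding wv by (rule mem_long) (use J pne sa es in auto)
    show ?thesis unfolding m1 m2 NEG_def using True pne sa es by auto
  next
    case False
    then have h: "b = a" "e = shc t" "t \<noteq> TypeD" using Idx_cases[OF x] by auto
    have w1: "w (V (a,b,e)) = (\<lambda>k. s a * vec (p a) (p a) (shc t) k)"
      unfolding h using wv[unfolded h] by (simp add: fun_eq_iff vec_def algebra_simps)
    have w2: "- w (V (a,b,e)) = (\<lambda>k. (- s a) * vec (p a) (p a) (shc t) k)"
      unfolding w1 by (simp add: fun_eq_iff)
    have m1: "- w (V (a,b,e)) \<in> V ` Idx t J \<longleftrightarrow> - s a = 1"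
      unfolding w2 by (rule mem_short) (use J sa h in auto)
    have m2: "w (V (a,b,e)) \<in> V ` Idx t J \<longleftrightarrow> s a = 1"
      unfolding w1 by (rule mem_short) (use J sa h in auto)
    show ?thesis unfolding m1 m2 NEG_def using h sa by auto
  qed
qed

definition SC :: "rtype \<Rightarrow> nat \<Rightarrow> nat \<times> nat \<times> real \<Rightarrow> bool" where
  "SC t j x = (case x of (a,b,e) \<Rightarrow>
     (a = 1 \<and> b \<noteq> j \<and> b \<noteq> 1 \<and> (e = -1 \<or> j < b)) \<or> (t = TypeC \<and> a = 1 \<and> b = j \<and> e = -1)
   \<or> (a = j \<and> b \<noteq> j) \<or> (a \<noteq> 1 \<and> a < j \<and> b = j \<and> e = 1)
   \<or> (t = TypeB \<and> a = b \<and> (a = 1 \<or> a = j)) \<or> (t = TypeC \<and> a = b \<and> a = j))"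

lemma S_char:
  assumes j: "1 < j" "j \<le> n" and x: "(a,b,e) \<in> Idx t {1..n}"
  shows "vec 1 j 1 - V (a,b,e) \<in> V ` Idx t {1..n} \<longleftrightarrow> SC t j (a,b,e)"
proof
  assume "vec 1 j 1 - V (a,b,e) \<in> V ` Idx t {1..n}"
  then obtain c d f where y: "(c,d,f) \<in> Idx t {1..n}" and eq: "vec 1 j 1 - vec a b e = vec c d f"
    by (auto simp: V_def)
  have h: "vec 1 j 1 k - vec a b e k = vec c d f k" for k using eq by (metis minus_apply)
  note cx = Idx_cases[OF x] and cy = Idx_cases[OF y]
  have s: "shc t = 0 \<or> shc t = 1" by (rule shc_vals)
  have st: "t = TypeC \<Longrightarrow> shc t = 1" "t = TypeB \<Longrightarrow> shc t = 0" by (auto simp: shc_def)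
  from h[of 1] h[of j] h[of a] h[of b] h[of c] h[of d] cx cy j s st
  show "SC t j (a,b,e)" unfolding SC_def vec_app
    by (cases t) (auto split: if_splits)
next
  assume sc: "SC t j (a,b,e)"
  note cx = Idx_cases[OF x]
  have st: "t = TypeC \<Longrightarrow> shc t = 1" "t = TypeB \<Longrightarrow> shc t = 0" by (auto simp: shc_def)
  have mem: "vec c d f \<in> V ` Idx t {1..n}" if "(c,d,f) \<in> Idx t {1..n}" for c d f
    using that by (force simp: V_def)
  have L: "(c,d,f) \<in> Idx t {1..n}" if "1 \<le> c" "c < d" "d \<le> n" "f = 1 \<or> f = -1" for c d f
    using that by (auto simp: Idx_def LIdx_def)
  have Sh: "(c,c,shc t) \<in> Idx t {1..n}" if "1 \<le> c" "c \<le> n" "t \<noteq> TypeD" for c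
    using that by (auto simp: Idx_def SIdx_def)
  consider (A) "a = 1" "b \<noteq> j" "b \<noteq> 1" "e = -1" | (B) "a = 1" "b \<noteq> j" "b \<noteq> 1" "e = 1" "j < b"
    | (C) "t = TypeC" "a = 1" "b = j" "e = -1" | (D) "a = j" "b \<noteq> j" "e = 1" | (E) "a = j" "b \<noteq> j" "e = -1"
    | (F) "a \<noteq> 1" "a < j" "b = j" "e = 1" | (G) "t = TypeB" "a = b" "a = 1" | (H) "t = TypeB" "a = b" "a = j"
    | (I) "t = TypeC" "a = b" "a = j"
    using sc cx unfolding SC_def by auto
  then show "vec 1 j 1 - V (a,b,e) \<in> V ` Idx t {1..n}"
  proof cases
    case A
    have "vec 1 j 1 - V (a,b,e) = vec (min j b) (max j b) 1" using A by (auto simp: V_def vec_app fun_eq_iff)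
    moreover have "vec (min j b) (max j b) 1 \<in> V ` Idx t {1..n}"
      by (rule mem, rule L) (use A cx j in auto)
    ultimately show ?thesis by simp
  next
    case B
    have "vec 1 j 1 - V (a,b,e) = vec j b (-1)" using B by (auto simp: V_def vec_app fun_eq_iff)
    moreover have "vec j b (-1) \<in> V ` Idx t {1..n}"
      by (rule mem, rule L) (use B cx j in auto)
    ultimately show ?thesis by simp
  next
    case C
    have "vec 1 j 1 - V (a,b,e) = vec j j (shc t)" using C st by (auto simp: V_def vec_app fun_eq_iff)
    moreover have "vec j j (shc t) \<in> V ` Idx t {1..n}"
      by (rule mem, rule Sh) (use C cx j in auto)
    ultimately show ?thesis by simp
  next
    case D
    have "vec 1 j 1 - V (a,b,e) = vec 1 b (-1)" using D cx j by (auto simp: V_def vec_app fun_eq_iff)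
    moreover have "vec 1 b (-1) \<in> V ` Idx t {1..n}"
      by (rule mem, rule L) (use D cx j in auto)
    ultimately show ?thesis by simp
  next
    case E
    have "vec 1 j 1 - V (a,b,e) = vec 1 b 1" using E cx j by (auto simp: V_def vec_app fun_eq_iff)
    moreover have "vec 1 b 1 \<in> V ` Idx t {1..n}"
      by (rule mem, rule L) (use E cx j in auto)
    ultimately show ?thesis by simp
  next
    case F
    have "vec 1 j 1 - V (a,b,e) = vec 1 a (-1)" using F cx j by (auto simp: V_def vec_app fun_eq_iff)
    moreover have "vec 1 a (-1) \<in> V ` Idx t {1..n}"
      by (rule mem, rule L) (use F cx j in auto)
    ultimately show ?thesis by simp
  next
    case G
    have "vec 1 j 1 - V (a,b,e) = vec j j (shc t)" using G cx j st by (auto simp: V_def vec_app fun_eq_iff)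
    moreover have "vec j j (shc t) \<in> V ` Idx t {1..n}"
      by (rule mem, rule Sh) (use G cx j in auto)
    ultimately show ?thesis by simp
  next
    case H
    have "vec 1 j 1 - V (a,b,e) = vec 1 1 (shc t)" using H cx j st by (auto simp: V_def vec_app fun_eq_iff)
    moreover have "vec 1 1 (shc t) \<in> V ` Idx t {1..n}"
      by (rule mem, rule Sh) (use H cx j in auto)
    ultimately show ?thesis by simp
  next
    case I
    have "vec 1 j 1 - V (a,b,e) = vec 1 j (-1)" using I cx j st by (auto simp: V_def vec_app fun_eq_iff)
    moreover have "vec 1 j (-1) \<in> V ` Idx t {1..n}"
      by (rule mem, rule L) (use I cx j in auto)
    ultimately show ?thesis by simp
  qed
qed

lemma card_pm: assumes "s = 1 \<or> s = -1"
  shows "card {e \<in> {1,-1::real}. Q \<or> e * s = -1} = (if Q then 2 else 1)"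
proof (cases Q)
  case True
  then have "{e \<in> {1,-1::real}. Q \<or> e * s = -1} = {1,-1}" by auto
  then show ?thesis using True by simp
next
  case False
  then have "{e \<in> {1,-1::real}. Q \<or> e * s = -1} = {-s}" using assms by auto
  then show ?thesis using False by simp
qed

lemma card_pm2: "card {e \<in> {1,-1::real}. e = -1 \<or> Q} = (if Q then 2 else 1)"
proof (cases Q)
  case True
  then have "{e \<in> {1,-1::real}. e = -1 \<or> Q} = {1,-1}" by auto
  then show ?thesis using True by simp
next
  case False
  then have "{e \<in> {1,-1::real}. e = -1 \<or> Q} = {-1}" by auto
  then show ?thesis using False by simp
qed

lemma finite_Idx: "finite J \<Longrightarrow> finite (Idx t J)"
proof -
  assume f: "finite J"
  have "LIdx J \<subseteq> J \<times> J \<times> {1,-1}" by (auto simp: LIdx_def)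
  moreover have "SIdx t J \<subseteq> (\<lambda>a. (a,a,shc t)) ` J" by (auto simp: SIdx_def)
  ultimately show ?thesis using f unfolding Idx_def
    by (meson finite_SigmaI finite_UnI finite_imageI finite_insert finite.emptyI finite_subset)
qed

lemma card5:
  assumes "finite A" "finite B" "finite C" "finite D" "finite E"
    "A \<inter> B = {}" "A \<inter> C = {}" "A \<inter> D = {}" "A \<inter> E = {}" "B \<inter> C = {}" "B \<inter> D = {}" "B \<inter> E = {}"
    "C \<inter> D = {}" "C \<inter> E = {}" "D \<inter> E = {}"
  shows "card (A \<union> B \<union> C \<union> D \<union> E) = card A + card B + card C + card D + card E"
proof -
  have "card (A \<union> B) = card A + card B" using assms by (simp add: card_Un_disjoint)
  moreover have "card (A \<union> B \<union> C) = card (A \<union> B) + card C" using assms by (intro card_Un_disjoint) auto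
  moreover have "card (A \<union> B \<union> C \<union> D) = card (A \<union> B \<union> C) + card D" using assms by (intro card_Un_disjoint) auto
  moreover have "card (A \<union> B \<union> C \<union> D \<union> E) = card (A \<union> B \<union> C \<union> D) + card E" using assms by (intro card_Un_disjoint) auto
  ultimately show ?thesis by simp
qed

lemma count_main:
  assumes j: "1 < j" "j \<le> n"
    and K: "K = Kset n j"
    and pK: "bij_betw p K K"
    and p1: "p' 1 = j" "p' j = 1" "s' 1 = -1" "s' j = -1"
    and pa: "\<forall>a\<in>K. p' a = p a \<and> s' a = s a \<and> (s a = 1 \<or> s a = -1)"
  shows "card {x \<in> Idx t {1..n}. NEG p' s' x} = card {x \<in> Idx t K. NEG p s x} + card {x \<in> Idx t {1..n}. SC t j x} + 1"
proof -
  let ?F = "Idx t {1..n}"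
  have Ksub: "K \<subseteq> {1..n}" "finite K" using K by (auto simp: Kset_def)
  have Kmem: "a \<in> K \<longleftrightarrow> 1 < a \<and> a \<le> n \<and> a \<noteq> j" for a using K j by (auto simp: Kset_def)
  have pKK: "p a \<in> K" if "a \<in> K" for a using pK that by (auto simp: bij_betw_def)
  have IK: "Idx t K \<subseteq> ?F" using Ksub by (auto simp: Idx_def LIdx_def SIdx_def)
  have fF: "finite ?F" by (rule finite_Idx) simp
  have E3: "{x \<in> Idx t K. NEG p' s' x} = {x \<in> Idx t K. NEG p s x}"
  proof (rule Collect_cong)
    fix x show "(x \<in> Idx t K \<and> NEG p' s' x) = (x \<in> Idx t K \<and> NEG p s x)"
    proof (cases x)
      case (fields a b e)
      show ?thesis
      proof (cases "x \<in> Idx t K")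
        case True
        then have "a \<in> K" "b \<in> K" using Idx_cases[of a b e t K] fields by auto
        then show ?thesis using pa unfolding fields NEG_def by auto
      qed simp
    qed
  qed
  have sp: "{x \<in> ?F. NEG p' s' x} = {x \<in> Idx t K. NEG p' s' x} \<union> {x \<in> ?F - Idx t K. NEG p' s' x}"
    using IK by auto
  have c1: "card {x \<in> ?F. NEG p' s' x} = card {x \<in> Idx t K. NEG p s x} + card {x \<in> ?F - Idx t K. NEG p' s' x}"
    unfolding sp E3[symmetric] by (rule card_Un_disjoint) (use fF IK in \<open>auto intro: finite_subset\<close>)
  define E where "E = {1, -1::real}"
  define N1 where "N1 = {(1::nat, j, 1::real)}"
  define N2 where "N2 = (\<lambda>(b,e). (1::nat,b,e)) ` (SIGMA b:K. {e\<in>E. j < p b \<or> e * s b = -1})"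
  define N3 where "N3 = (\<lambda>a. (a,j,1::real)) ` {a\<in>K. a < j}"
  define N4 where "N4 = (\<lambda>(b,e). (j,b,e)) ` ({b\<in>K. j < b} \<times> E)"
  define N5 where "N5 = (if t = TypeD then {} else {(1::nat,1::nat,shc t),(j,j,shc t)})"
  define M1 where "M1 = (\<lambda>(b,e). (1::nat,b,e)) ` (SIGMA b:K. {e\<in>E. e = -1 \<or> j < b})"
  define M2 where "M2 = (if t = TypeC then {(1::nat,j,-1::real)} else {})"
  define M5 where "M5 = (if t = TypeB then {(1::nat,1::nat,0::real),(j,j,0)} else if t = TypeC then {(j,j,1)} else {})"
  have pb: "1 < p b \<and> p b \<le> n \<and> p b \<noteq> j" if "b \<in> K" for b using pKK[OF that] Kmem by blast
  have inK: "(a,b,e) \<in> Idx t K" if "(a,b,e) \<in> ?F" "a \<in> K" "b \<in> K" for a b e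
    using that Idx_cases[OF that(1)] by (auto simp: Idx_def LIdx_def SIdx_def)
  have EN: "{x \<in> ?F - Idx t K. NEG p' s' x} = N1 \<union> N2 \<union> N3 \<union> N4 \<union> N5"
  proof (rule set_eqI)
    fix x :: "nat \<times> nat \<times> real"
    obtain a b e where x: "x = (a,b,e)" by (cases x)
    show "x \<in> {x \<in> ?F - Idx t K. NEG p' s' x} \<longleftrightarrow> x \<in> N1 \<union> N2 \<union> N3 \<union> N4 \<union> N5"
    proof
      assume "x \<in> {x \<in> ?F - Idx t K. NEG p' s' x}"
      then have xF: "(a,b,e) \<in> ?F" and xK: "(a,b,e) \<notin> Idx t K" and ng: "NEG p' s' (a,b,e)" using x by auto
      note c = Idx_cases[OF xF]
      show "x \<in> N1 \<union> N2 \<union> N3 \<union> N4 \<union> N5"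
      proof (cases "a < b")
        case True
        then have ab: "1 \<le> a" "a < b" "b \<le> n" "e = 1 \<or> e = -1" using c by auto
        consider (A) "a = 1" "b = j" | (B) "a = 1" "b \<noteq> j" | (C) "a = j" | (D) "a \<noteq> 1" "a \<noteq> j" "b = j"
          using xK inK[OF xF] Kmem ab by force
        then show ?thesis
        proof cases
          case A then have "e = 1" using ng p1 j ab unfolding NEG_def by auto
          then show ?thesis using A x unfolding N1_def by auto
        next
          case B then have bK: "b \<in> K" using Kmem ab by auto
          then have "j < p b \<or> e * s b = -1" using ng p1 pa pb[OF bK] B ab unfolding NEG_def by auto
          then show ?thesis using B bK ab x unfolding N2_def E_def by (auto simp: image_iff)
        next
          case C then have bK: "b \<in> K" using Kmem ab by auto
          then show ?thesis using C ab x unfolding N4_def E_def by (auto simp: image_iff)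
        next
          case D then have aK: "a \<in> K" using Kmem ab by auto
          then have "e = 1" using ng p1 pa pb[OF aK] D ab unfolding NEG_def by auto
          then show ?thesis using D aK ab x unfolding N3_def by (auto simp: image_iff)
        qed
      next
        case False
        then have h: "b = a" "e = shc t" "t \<noteq> TypeD" "a \<in> {1..n}" using c by auto
        then have "a = 1 \<or> a = j" using xK inK[OF xF] Kmem by force
        then show ?thesis using h x unfolding N5_def by auto
      qed
    next
      assume "x \<in> N1 \<union> N2 \<union> N3 \<union> N4 \<union> N5"
      then consider (A) "x \<in> N1" | (B) "x \<in> N2" | (C) "x \<in> N3" | (D) "x \<in> N4" | (E) "x \<in> N5" by blast
      then show "x \<in> {x \<in> ?F - Idx t K. NEG p' s' x}"
      proof cases
        case A then show ?thesis using j p1 unfolding N1_def NEG_def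
          by (auto simp: Idx_def LIdx_def SIdx_def Kset_def K)
      next
        case B
        then obtain b e' where b: "b \<in> K" "e' \<in> E" "j < p b \<or> e' * s b = -1" "x = (1,b,e')"
          unfolding N2_def by auto
        have pbb: "p' b = p b" "s' b = s b" using pa b(1) by auto
        have m: "(1,b,e') \<in> ?F" using Kmem[of b] b j unfolding E_def by (auto simp: Idx_def LIdx_def)
        have nk: "(1,b,e') \<notin> Idx t K" using Kmem[of 1] by (auto simp: Idx_def LIdx_def SIdx_def)
        have b1: "b \<noteq> 1" using Kmem[of b] b(1) by auto
        have "p b \<noteq> j" "j \<noteq> p b" using pb[OF b(1)] by auto
        then have "(p' 1 < p' b \<and> s' 1 = -1) \<or> (p' b < p' 1 \<and> e' * s' b = -1)"
        proof -
          from b(3) show ?thesis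
          proof
            assume "j < p b" then show ?thesis using pbb p1(1) p1(3) by auto
          next
            assume "e' * s b = -1" then show ?thesis using pbb p1(1) p1(3) \<open>p b \<noteq> j\<close> by auto
          qed
        qed
        then have "NEG p' s' (1,b,e')" using b1 unfolding NEG_def by auto
        then show ?thesis using m nk b(4) by simp
      next
        case C
        then obtain a where a: "a \<in> K" "a < j" "x = (a,j,1)" unfolding N3_def by auto
        have pbb: "p' a = p a" "s' a = s a" using pa a(1) by auto
        have m: "(a,j,1) \<in> ?F" using Kmem[of a] a j by (auto simp: Idx_def LIdx_def)
        have nk: "(a,j,1) \<notin> Idx t K" using Kmem[of j] by (auto simp: Idx_def LIdx_def SIdx_def)
        have "NEG p' s' (a,j,1)" using pb[OF a(1)] pbb p1 Kmem[of a] a unfolding NEG_def by auto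
        then show ?thesis using m nk a(3) by simp
      next
        case D
        then obtain b e' where b: "b \<in> K" "j < b" "e' \<in> E" "x = (j,b,e')" unfolding N4_def by auto
        have pbb: "p' b = p b" "s' b = s b" using pa b(1) by auto
        have m: "(j,b,e') \<in> ?F" using Kmem[of b] b j unfolding E_def by (auto simp: Idx_def LIdx_def)
        have nk: "(j,b,e') \<notin> Idx t K" using Kmem[of j] by (auto simp: Idx_def LIdx_def SIdx_def)
        have "NEG p' s' (j,b,e')" using pb[OF b(1)] pbb p1 b unfolding NEG_def by auto
        then show ?thesis using m nk b(4) by simp
      next
        case E
        then show ?thesis using p1 j unfolding N5_def NEG_def
          by (auto simp: Idx_def LIdx_def SIdx_def Kset_def K split: if_splits)
      qed
    qed
  qed
  have shB: "t = TypeB \<Longrightarrow> shc t = 0" and shC: "t = TypeC \<Longrightarrow> shc t = 1" by (auto simp: shc_def)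
  have EM: "{x \<in> ?F. SC t j x} = M1 \<union> M2 \<union> N3 \<union> N4 \<union> M5"
  proof (rule set_eqI)
    fix x :: "nat \<times> nat \<times> real"
    obtain a b e where x: "x = (a,b,e)" by (cases x)
    show "x \<in> {x \<in> ?F. SC t j x} \<longleftrightarrow> x \<in> M1 \<union> M2 \<union> N3 \<union> N4 \<union> M5"
    proof
      assume "x \<in> {x \<in> ?F. SC t j x}"
      then have xF: "(a,b,e) \<in> ?F" and sc: "SC t j (a,b,e)" using x by auto
      note c = Idx_cases[OF xF]
      consider (A) "a = 1" "b \<noteq> j" "b \<noteq> 1" "e = -1 \<or> j < b" | (B) "t = TypeC" "a = 1" "b = j" "e = -1"
        | (C) "a = j" "b \<noteq> j" | (D) "a \<noteq> 1" "a < j" "b = j" "e = 1"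
        | (E) "t = TypeB" "a = b" "a = 1 \<or> a = j" | (F) "t = TypeC" "a = b" "a = j"
        using sc unfolding SC_def by auto
      then show "x \<in> M1 \<union> M2 \<union> N3 \<union> N4 \<union> M5"
      proof cases
        case A
        then have "b \<in> K" "e \<in> E" "e = -1 \<or> j < b" using c Kmem[of b] unfolding E_def by auto
        then have "x \<in> M1" unfolding M1_def x A(1) by (auto simp: image_iff)
        then show ?thesis by blast
      next
        case B then show ?thesis unfolding M2_def x by auto
      next
        case C
        then have "b \<in> K" "j < b" "e \<in> E" using c Kmem[of b] unfolding E_def by auto
        then have "x \<in> N4" unfolding N4_def x C(1) by (auto simp: image_iff)
        then show ?thesis by blast
      next
        case D
        then have "a \<in> K" using c Kmem[of a] by auto
        then have "x \<in> N3" unfolding N3_def x D using D by (auto simp: image_iff)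
        then show ?thesis by blast
      next
        case E
        then have "e = 0" using c shB by auto
        then show ?thesis using E unfolding M5_def x by auto
      next
        case F
        then have "e = 1" using c shC by auto
        then show ?thesis using F unfolding M5_def x by auto
      qed
    next
      have L: "(a',b',e') \<in> ?F" if "1 \<le> a'" "a' < b'" "b' \<le> n" "e' = 1 \<or> e' = -1" for a' b' e'
        using that by (auto simp: Idx_def LIdx_def)
      have Sh: "(a',a',shc t) \<in> ?F" if "1 \<le> a'" "a' \<le> n" "t \<noteq> TypeD" for a'
        using that by (auto simp: Idx_def SIdx_def)
      assume "x \<in> M1 \<union> M2 \<union> N3 \<union> N4 \<union> M5"
      then consider (A) "x \<in> M1" | (B) "x \<in> M2" | (C) "x \<in> N3" | (D) "x \<in> N4" | (E) "x \<in> M5" by blast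
      then show "x \<in> {x \<in> ?F. SC t j x}"
      proof cases
        case A
        then obtain b' e' where b: "b' \<in> K" "e' \<in> E" "e' = -1 \<or> j < b'" "x = (1,b',e')"
          unfolding M1_def by auto
        have "(1,b',e') \<in> ?F" by (rule L) (use b Kmem[of b'] in \<open>auto simp: E_def\<close>)
        moreover have "SC t j (1,b',e')" using b Kmem[of b'] unfolding SC_def by auto
        ultimately show ?thesis using b(4) by simp
      next
        case B
        then have "t = TypeC" "x = (1,j,-1)" unfolding M2_def by (auto split: if_splits)
        moreover have "(1,j,-1) \<in> ?F" by (rule L) (use j in auto)
        ultimately show ?thesis unfolding SC_def by auto
      next
        case C
        then obtain a' where a: "a' \<in> K" "a' < j" "x = (a',j,1)" unfolding N3_def by auto
        have "(a',j,1) \<in> ?F" by (rule L) (use a Kmem[of a'] j in auto)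
        moreover have "SC t j (a',j,1)" using a Kmem[of a'] unfolding SC_def by auto
        ultimately show ?thesis using a(3) by simp
      next
        case D
        then obtain b' e' where b: "b' \<in> K" "j < b'" "e' \<in> E" "x = (j,b',e')" unfolding N4_def by auto
        have "(j,b',e') \<in> ?F" by (rule L) (use b Kmem[of b'] j in \<open>auto simp: E_def\<close>)
        moreover have "SC t j (j,b',e')" using b unfolding SC_def by auto
        ultimately show ?thesis using b(4) by simp
      next
        case E
        show ?thesis
        proof (cases t)
          case TypeB
          then have "x = (1,1,shc t) \<or> x = (j,j,shc t)" using E shB unfolding M5_def by auto
          moreover have "(1,1,shc t) \<in> ?F" by (rule Sh) (use TypeB j in auto)
          moreover have "(j,j,shc t) \<in> ?F" by (rule Sh) (use TypeB j in auto)
          ultimately show ?thesis using TypeB unfolding SC_def by auto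
        next
          case TypeC
          then have "x = (j,j,shc t)" using E shC unfolding M5_def by auto
          moreover have "(j,j,shc t) \<in> ?F" by (rule Sh) (use TypeC j in auto)
          ultimately show ?thesis using TypeC unfolding SC_def by auto
        next
          case TypeD then show ?thesis using E unfolding M5_def by auto
        qed
      qed
    qed
  qed
  have fE: "finite E" unfolding E_def by simp
  have f2: "finite N2" "finite M1" unfolding N2_def M1_def using Ksub fE by auto
  have f3: "finite N3" "finite N4" unfolding N3_def N4_def using Ksub fE by auto
  have f1: "finite N1" "finite N5" "finite M2" "finite M5" unfolding N1_def N5_def M2_def M5_def by auto
  have K1: "1 \<notin> K" "j \<notin> K" using Kmem by auto
  have cN: "card (N1 \<union> N2 \<union> N3 \<union> N4 \<union> N5) = card N1 + card N2 + card N3 + card N4 + card N5"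
    by (rule card5) (use f1 f2 f3 K1 j in \<open>auto simp: N1_def N2_def N3_def N4_def N5_def\<close>)
  have cM: "card (M1 \<union> M2 \<union> N3 \<union> N4 \<union> M5) = card M1 + card M2 + card N3 + card N4 + card M5"
    by (rule card5) (use f1 f2 f3 K1 j in \<open>auto simp: M1_def M2_def N3_def N4_def M5_def\<close>)
  have inj1: "inj_on (\<lambda>(b,e). (1::nat,b,e)) X" for X :: "(nat \<times> real) set" by (auto simp: inj_on_def)
  have cN2: "card N2 = (\<Sum>b\<in>K. if j < p b then 2 else 1)"
  proof -
    have "card N2 = card (SIGMA b:K. {e\<in>E. j < p b \<or> e * s b = -1})"
      unfolding N2_def by (rule card_image[OF inj1])
    also have "\<dots> = (\<Sum>b\<in>K. card {e\<in>E. j < p b \<or> e * s b = -1})"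
      using Ksub fE by (simp add: card_SigmaI)
    also have "\<dots> = (\<Sum>b\<in>K. if j < p b then 2 else 1)"
    proof (rule sum.cong)
      fix b assume "b \<in> K"
      then have "s b = 1 \<or> s b = -1" using pa by auto
      then show "card {e\<in>E. j < p b \<or> e * s b = -1} = (if j < p b then 2 else 1)"
        unfolding E_def by (rule card_pm)
    qed simp
    finally show ?thesis .
  qed
  have cM1: "card M1 = (\<Sum>b\<in>K. if j < b then 2 else 1)"
  proof -
    have "card M1 = card (SIGMA b:K. {e\<in>E. e = -1 \<or> j < b})"
      unfolding M1_def by (rule card_image[OF inj1])
    also have "\<dots> = (\<Sum>b\<in>K. card {e\<in>E. e = -1 \<or> j < b})"
      using Ksub fE by (simp add: card_SigmaI)
    also have "\<dots> = (\<Sum>b\<in>K. if j < b then 2 else 1)"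
      unfolding E_def by (rule sum.cong) (rule refl, rule card_pm2)
    finally show ?thesis .
  qed
  have "(\<Sum>b\<in>K. (\<lambda>c. if j < c then 2 else 1::nat) (p b)) = (\<Sum>b\<in>K. (\<lambda>c. if j < c then 2 else 1) b)"
    by (rule sum.reindex_bij_betw[OF pK])
  then have c21: "card N2 = card M1" unfolding cN2 cM1 by simp
  have c5: "card N5 = card M2 + card M5" using j
    by (cases t) (auto simp: N5_def M2_def M5_def)
  have c1': "card N1 = 1" unfolding N1_def by simp
  show ?thesis unfolding c1 EN EM cN cM c21 c5 c1' by simp
qed

lemma card_V: "inj_on V X \<Longrightarrow> card {\<alpha> \<in> V ` X. P \<alpha>} = card {x \<in> X. P (V x)}"
proof -
  assume i: "inj_on V X"
  have "{\<alpha> \<in> V ` X. P \<alpha>} = V ` {x \<in> X. P (V x)}" by auto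
  then show ?thesis using i by (simp add: card_image inj_on_subset[OF i])
qed

theorem lemma3p3:
  fixes t :: rtype and n j :: nat and D :: "(nat \<Rightarrow> real) set"
  assumes "D \<subseteq> pos_roots t n"
    and "orthogonal_set n D"
    and "1 < j" and "j \<le> n"
    and "D \<inter> Cols t n 1 = {eps 1 + eps j}"
  shows "let PhiT = pos_roots t n - (Cols t n 1 \<union> Cols t n j \<union> Rows t n (int j) \<union> Rows t n (- int j));
             DT = D \<inter> PhiT;
             sigmaT = refl_prod n DT
         in len t n (refl_prod n D)
            = card {\<alpha> \<in> PhiT. sigmaT \<alpha> \<notin> PhiT} + card (Sset t n (eps 1 + eps j)) + 1"
proof -
  note DP = assms(1) and orth = assms(2) and j = assms(3,4) and DC = assms(5)
  define K where "K = Kset n j"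
  let ?F = "Idx t {1..n}"
  let ?PT = "V ` Idx t K"
  let ?b = "vec 1 j 1"
  define DT where "DT = D \<inter> ?PT"
  have PhiT: "pos_roots t n - (Cols t n 1 \<union> Cols t n j \<union> Rows t n (int j) \<union> Rows t n (- int j)) = ?PT"
    unfolding K_def by (rule PhiT_char[OF j])
  have Ksub: "K \<subseteq> {1..n}" unfolding K_def Kset_def by auto
  have Kmem: "a \<in> K \<longleftrightarrow> 1 < a \<and> a \<le> n \<and> a \<noteq> j" for a using j by (auto simp: K_def Kset_def)
  have IK: "Idx t K \<subseteq> ?F" using Ksub by (auto simp: Idx_def LIdx_def SIdx_def)
  have bF: "(1,j,1) \<in> ?F" using j by (auto simp: Idx_def LIdx_def)
  have bV: "?b = V (1,j,1)" by (simp add: V_def)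
  have bD: "?b \<in> D" using DC by (auto simp: vec_p)
  have Dsub: "\<alpha> \<in> ?PT" if aD: "\<alpha> \<in> D" "\<alpha> \<noteq> ?b" for \<alpha>
  proof -
    obtain a b e where x: "(a,b,e) \<in> ?F" "\<alpha> = V (a,b,e)"
      using DP aD(1) unfolding pos_roots_V by auto
    have "\<alpha> \<notin> Cols t n 1" using DC that by (auto simp: vec_p)
    then have a1: "a \<noteq> 1" using col_V[OF x(1)] x DP that(1) by (auto simp: Cols_def)
    have "ip n \<alpha> ?b = 0" using orth that bD unfolding orthogonal_set_def by blast
    then have "\<alpha> 1 + \<alpha> j = 0" using ip_sym[of n \<alpha> ?b] ip_vec[of 1 n j 1 \<alpha>] j by simp
    then have "vec a b e 1 + vec a b e j = 0" using x by (simp add: V_def)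
    then have "a \<noteq> j \<and> b \<noteq> j \<and> b \<noteq> 1" using Idx_cases[OF x(1)] a1 shc_vals[of t] j
      by (auto simp: vec_app split: if_splits)
    moreover have "a \<in> {1..n}" "b \<in> {1..n}" using Idx_cases[OF x(1)] by auto
    ultimately have abK: "a \<in> K" "b \<in> K" using a1 unfolding Kmem[of a] Kmem[of b] by auto
    have "(a,b,e) \<in> Idx t K"
    proof (cases "a < b")
      case True
      then have "e = 1 \<or> e = -1" using Idx_cases[OF x(1)] by auto
      then show ?thesis using abK True unfolding Idx_def LIdx_def by blast
    next
      case False
      then have "b = a" "e = shc t" "t \<noteq> TypeD" using Idx_cases[OF x(1)] by auto
      then show ?thesis using abK unfolding Idx_def SIdx_def by auto
    qed
    then show ?thesis using x by auto
  qed
  have bnot: "?b \<notin> ?PT"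
  proof
    assume "?b \<in> ?PT"
    then obtain y where y: "y \<in> Idx t K" "?b = V y" by auto
    have yF: "y \<in> ?F" using y(1) IK by auto
    have "V y = V (1,j,1)" using y(2) bV by simp
    then have "y = (1,j,1)" using inj_onD[OF V_inj[of t "{1..n}"] _ yF bF] by blast
    then show False using y(1) Idx_cases[of 1 j 1 t K] Kmem by auto
  qed
  have Deq: "D = insert ?b DT" using Dsub bD unfolding DT_def by auto
  have bDT: "?b \<notin> DT" using bnot unfolding DT_def by auto
  have finF: "finite (V ` ?F)" by (intro finite_imageI finite_Idx) simp
  have finD: "finite D" using DP finF pos_roots_V by (metis finite_subset)
  have finDT: "finite DT" using finD unfolding DT_def by simp
  have orthDT: "orthogonal_set n DT" using orth orth_subset unfolding DT_def by blast
  have sig: "refl_prod n D = refl n ?b \<circ> refl_prod n DT"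
    using refl_prod_insert[OF orth _ finDT bDT] Deq by simp
  obtain p s where ps: "SP n (refl_prod n DT) p s" "\<forall>a. a \<notin> K \<longrightarrow> p a = a \<and> s a = 1"
    using sigT_SP[OF finDT orthDT _ Ksub] unfolding DT_def by blast
  have pb: "bij_betw p {1..n} {1..n}" by (rule SP_bij[OF ps(1)])
  have pK: "bij_betw p K K"
  proof -
    have inj: "inj_on p {1..n}" using pb bij_betw_def by blast
    have "p ` K \<subseteq> K"
    proof
      fix c assume "c \<in> p ` K"
      then obtain a where a: "a \<in> K" "c = p a" by auto
      have "a \<in> {1..n}" using a Ksub by auto
      then have pa1: "p a \<in> {1..n}" by (rule bij_betw_apply[OF pb])
      moreover have "p a \<notin> {1..n} - K"
      proof
        assume h: "p a \<in> {1..n} - K"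
        then have "p (p a) = p a" using ps(2) by auto
        then have "p a = a" by (rule inj_onD[OF inj _ pa1 \<open>a \<in> {1..n}\<close>])
        then show False using h a by auto
      qed
      ultimately show "c \<in> K" using a by blast
    qed
    moreover have "K \<subseteq> p ` K"
    proof
      fix c assume c: "c \<in> K"
      have "c \<in> p ` {1..n}" using c Ksub pb by (auto simp: bij_betw_def)
      then obtain a where a: "a \<in> {1..n}" "c = p a" by blast
      have "a \<in> K" using ps(2) a c by auto
      then show "c \<in> p ` K" using a by auto
    qed
    ultimately show ?thesis using inj_on_subset[OF inj Ksub] by (auto simp: bij_betw_def)
  qed
  have pKK: "p a \<in> K" if "a \<in> K" for a using pK that by (auto simp: bij_betw_def)
  define p' where "p' = (\<lambda>a. if a = 1 then j else if a = j then 1 else a) \<circ> p"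
  define s' where "s' = (\<lambda>a. s a * (\<lambda>a. if a = 1 \<or> a = j then - 1 else 1) (p a))"
  have sp': "SP n (refl_prod n D) p' s'"
    unfolding sig p'_def s'_def
    by (rule SP_comp[OF refl_long ps(1)]) (use j in auto)
  have p1: "p' 1 = j" "p' j = 1" "s' 1 = -1" "s' j = -1"
    using ps(2) Kmem j unfolding p'_def s'_def by auto
  have pa: "\<forall>a\<in>K. p' a = p a \<and> s' a = s a \<and> (s a = 1 \<or> s a = -1)"
  proof
    fix a assume a: "a \<in> K"
    then have "p a \<noteq> 1" "p a \<noteq> j" using pKK[OF a] Kmem by auto
    moreover have "a \<in> {1..n}" using a Ksub by blast
    then have "s a = 1 \<or> s a = -1" by (rule SP_sign[OF ps(1)])
    ultimately show "p' a = p a \<and> s' a = s a \<and> (s a = 1 \<or> s a = -1)" unfolding p'_def s'_def by auto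
  qed
  have pb': "bij_betw p' {1..n} {1..n}" by (rule SP_bij[OF sp'])
  have L: "len t n (refl_prod n D) = card {x \<in> ?F. NEG p' s' x}"
  proof -
    have "len t n (refl_prod n D) = card {x \<in> ?F. - refl_prod n D (V x) \<in> V ` ?F}"
      unfolding len_def pos_roots_V by (rule card_V[OF V_inj])
    also have "\<dots> = card {x \<in> ?F. NEG p' s' x}"
    proof (rule arg_cong[where f = card], rule Collect_cong)
      fix x show "(x \<in> ?F \<and> - refl_prod n D (V x) \<in> V ` ?F) = (x \<in> ?F \<and> NEG p' s' x)"
      proof (cases x)
        case (fields a b e)
        show ?thesis
        proof (cases "x \<in> ?F")
          case True
          have "a \<in> {1..n}" "b \<in> {1..n}" using Idx_cases[of a b e t "{1..n}"] True fields by auto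
          then have "p' a \<in> {1..n}" "p' b \<in> {1..n}" using pb' by (auto simp: bij_betw_def)
          then show ?thesis using neg_char[OF sp', of a b e t "{1..n}"] True fields by auto
        qed simp
      qed
    qed
    finally show ?thesis .
  qed
  have T: "card {\<alpha> \<in> ?PT. refl_prod n DT \<alpha> \<notin> ?PT} = card {x \<in> Idx t K. NEG p s x}"
  proof -
    have "card {\<alpha> \<in> ?PT. refl_prod n DT \<alpha> \<notin> ?PT} = card {x \<in> Idx t K. refl_prod n DT (V x) \<notin> ?PT}"
      by (rule card_V[OF V_inj])
    also have "\<dots> = card {x \<in> Idx t K. NEG p s x}"
    proof (rule arg_cong[where f = card], rule Collect_cong)
      fix x show "(x \<in> Idx t K \<and> refl_prod n DT (V x) \<notin> ?PT) = (x \<in> Idx t K \<and> NEG p s x)"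
      proof (cases x)
        case (fields a b e)
        show ?thesis
        proof (cases "x \<in> Idx t K")
          case True
          have "a \<in> K" "b \<in> K" using Idx_cases[of a b e t K] True fields by auto
          then have "p a \<in> K" "p b \<in> K" using pKK by auto
          moreover have "(a,b,e) \<in> ?F" using True fields IK by auto
          ultimately show ?thesis using neg_char[OF ps(1), of a b e t K] True fields Ksub by auto
        qed simp
      qed
    qed
    finally show ?thesis .
  qed
  have S: "card (Sset t n (eps 1 + eps j)) = card {x \<in> ?F. SC t j x}"
  proof -
    have "card (Sset t n (eps 1 + eps j)) = card {x \<in> ?F. ?b - V x \<in> V ` ?F}"
      unfolding Sset_def pos_roots_V vec_p by (rule card_V[OF V_inj])
    also have "\<dots> = card {x \<in> ?F. SC t j x}"
    proof (rule arg_cong[where f = card], rule Collect_cong)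
      fix x show "(x \<in> ?F \<and> ?b - V x \<in> V ` ?F) = (x \<in> ?F \<and> SC t j x)"
      proof (cases x)
        case (fields a b e)
        then show ?thesis using S_char[OF j, of a b e t] by blast
      qed
    qed
    finally show ?thesis .
  qed
  have C: "card {x \<in> ?F. NEG p' s' x} = card {x \<in> Idx t K. NEG p s x} + card {x \<in> ?F. SC t j x} + 1"
    by (rule count_main[OF j K_def pK p1 pa])
  show ?thesis unfolding Let_def PhiT DT_def[symmetric] L T S C by simp
qed

end
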